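(* Let $X$ be a finite metric space with points labelled $x_1,\dots,x_m$, and regard its isometry group $\mathrm{Iso}(X)$ as a subgroup of the symmetric group $\mathfrak{S}_m$. Then the following assignment is a well-defined bijection $$\mathcal{L}(X)\;\longrightarrow\;\Big(\bigsqcup_{\substack{(r_1,\dots,r_m)\\ r_i\ge1,\ n=\sum r_i}}\mathrm{Met}_n/(\mathfrak{S}_{r_1}\times\cdots\times\mathfrak{S}_{r_m})\Big)\Big/\mathrm{Iso}(X):$$ given a line along a surjection $f\colon Y\to X$ with $\#Y=n$, set $r_i=\#f^{-1}(x_i)$, label the points of $Y$ so that $f^{-1}(x_i)=\{y_i^1,\dots,y_i^{r_i}\}$, and send the line to the class of the distance matrix of $Y$ with respect to the ordering $(y_1^1,\dots,y_1^{r_1},\dots,y_m^1,\dots,y_m^{r_m})$, in the component indexed by $(r_1,\dots,r_m)$. Here the tuple $(r_1,\dots,r_m)$ partitions the rows and columns of each matrix in $\mathrm{Met}_n$ into $m$ consecutive sections of sizes $r_1,\dots,r_m$; the factor $\mathfrak{S}_{r_i}$ acts by simultaneously permuting the rows and columns within the $i$-th section; and $\mathrm{Iso}(X)$ acts by permuting the sections (an element $\rho$ moving section $i$ to position $\rho(i)$, with the tuple $(r_1,\dots,r_m)$ permuted accordingly).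
   Context: For finite metric spaces $(X,d_X)$, $(Y,d_Y)$ and a surjection $f\colon Y\to X$, the line from $Y$ to $X$ along $f$ is the family $(Y_{f,t})_{0<t\le1}$ of metric spaces $Y_{f,t}=(Y,d_{f,t})$, $d_{f,t}(y,y')=t\,d_Y(y,y')+(1-t)\,d_X(f(y),f(y'))$. The set of lines to $X$, $\mathcal{L}(X)$, is the set of all such lines (over all finite metric spaces $Y$ and all surjections $f\colon Y\to X$) modulo the relation: $(Y_{f,t})\sim(Y_{g,t})$ (for $f,g\colon Y\to X$) if there exist isometries $h\colon Y\to Y$ and $k\colon X\to X$ with $k\circ f=g\circ h$. $\mathrm{Met}_n$ is the set of real $n\times n$ matrices $(d_{ij})$ with $d_{ii}=0$, $d_{ij}=d_{ji}>0$ for $i\neq j$, and $d_{ij}+d_{jk}\ge d_{ik}$ for all $i,j,k$ (i.e. distance matrices of ordered $n$-point metric spaces). *)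

theory Defs
  imports Complex_Main
begin

definition metric_on :: "'a set \<Rightarrow> ('a \<Rightarrow> 'a \<Rightarrow> real) \<Rightarrow> bool" where
  "metric_on S d \<longleftrightarrow>
     (\<forall>x\<in>S. d x x = 0) \<and>
     (\<forall>x\<in>S. \<forall>y\<in>S. x \<noteq> y \<longrightarrow> d x y > 0) \<and>
     (\<forall>x\<in>S. \<forall>y\<in>S. d x y = d y x) \<and>
     (\<forall>x\<in>S. \<forall>y\<in>S. \<forall>z\<in>S. d x z \<le> d x y + d y z)"

text \<open>X is the metric space with points x_1..x_m, represented by the indices 0..m-1
  and distance dX. Isometries of X (elements of Iso(X), viewed inside the symmetric group).\<close>
definition isoX :: "nat \<Rightarrow> (nat \<Rightarrow> nat \<Rightarrow> real) \<Rightarrow> (nat \<Rightarrow> nat) \<Rightarrow> bool" where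
  "isoX m dX k \<longleftrightarrow> bij_betw k {..<m} {..<m} \<and>
     (\<forall>i<m. \<forall>j<m. dX (k i) (k j) = dX i j)"

definition is_line :: "nat \<Rightarrow> 'a set \<Rightarrow> ('a \<Rightarrow> 'a \<Rightarrow> real) \<Rightarrow> ('a \<Rightarrow> nat) \<Rightarrow> bool" where
  "is_line m Y dY f \<longleftrightarrow> finite Y \<and> metric_on Y dY \<and> f ` Y = {..<m}"

definition line_equiv :: "nat \<Rightarrow> (nat \<Rightarrow> nat \<Rightarrow> real) \<Rightarrow>
    'a set \<Rightarrow> ('a \<Rightarrow> 'a \<Rightarrow> real) \<Rightarrow> ('a \<Rightarrow> nat) \<Rightarrow>
    'b set \<Rightarrow> ('b \<Rightarrow> 'b \<Rightarrow> real) \<Rightarrow> ('b \<Rightarrow> nat) \<Rightarrow> bool" where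
  "line_equiv m dX Y dY f Y' dY' f' \<longleftrightarrow>
     (\<exists>h k. bij_betw h Y Y' \<and> (\<forall>y\<in>Y. \<forall>z\<in>Y. dY' (h y) (h z) = dY y z) \<and>
            isoX m dX k \<and> (\<forall>y\<in>Y. k (f y) = f' (h y)))"

text \<open>Met_n, with n\<times>n matrices represented as functions padded by 0 outside the index range.\<close>
definition Met :: "nat \<Rightarrow> (nat \<Rightarrow> nat \<Rightarrow> real) set" where
  "Met n = {D. (\<forall>i j. \<not> (i < n \<and> j < n) \<longrightarrow> D i j = 0) \<and>
               (\<forall>i<n. D i i = 0) \<and>
               (\<forall>i<n. \<forall>j<n. i \<noteq> j \<longrightarrow> D i j > 0 \<and> D i j = D j i) \<and>
               (\<forall>i<n. \<forall>j<n. \<forall>k<n. D i j + D j k \<ge> D i k)}"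

text \<open>Sections determined by a tuple r = (r_1,...,r_m) (0-indexed).\<close>
definition off :: "nat list \<Rightarrow> nat \<Rightarrow> nat" where
  "off r i = sum_list (take i r)"

definition sect :: "nat list \<Rightarrow> nat \<Rightarrow> nat set" where
  "sect r i = {off r i ..< off r i + r ! i}"

definition target_elem :: "nat \<Rightarrow> nat list \<Rightarrow> (nat \<Rightarrow> nat \<Rightarrow> real) \<Rightarrow> bool" where
  "target_elem m r D \<longleftrightarrow> length r = m \<and> (\<forall>i<m. r ! i \<ge> 1) \<and> D \<in> Met (sum_list r)"

definition sect_equiv :: "nat \<Rightarrow> nat list \<Rightarrow> (nat \<Rightarrow> nat \<Rightarrow> real) \<Rightarrow> (nat \<Rightarrow> nat \<Rightarrow> real) \<Rightarrow> bool" where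
  "sect_equiv m r D D' \<longleftrightarrow>
     (\<exists>\<sigma>. bij_betw \<sigma> {..<sum_list r} {..<sum_list r} \<and>
          (\<forall>i<m. \<sigma> ` sect r i = sect r i) \<and>
          (\<forall>p q. D' p q = (if p < sum_list r \<and> q < sum_list r then D (\<sigma> p) (\<sigma> q) else 0)))"

definition iso_moves :: "nat \<Rightarrow> (nat \<Rightarrow> nat) \<Rightarrow> nat list \<Rightarrow> (nat \<Rightarrow> nat \<Rightarrow> real)
    \<Rightarrow> nat list \<Rightarrow> (nat \<Rightarrow> nat \<Rightarrow> real) \<Rightarrow> bool" where
  "iso_moves m \<rho> r D r' D' \<longleftrightarrow>
     length r' = m \<and> (\<forall>i<m. r' ! (\<rho> i) = r ! i) \<and>
     (\<forall>p q. \<not> (p < sum_list r' \<and> q < sum_list r') \<longrightarrow> D' p q = 0) \<and>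
     (\<forall>i<m. \<forall>j<m. \<forall>a<r ! i. \<forall>b<r ! j.
        D' (off r' (\<rho> i) + a) (off r' (\<rho> j) + b) = D (off r i + a) (off r j + b))"

text \<open>Equality in (\<Squnion> Met_n/(S_{r_1}\<times>...\<times>S_{r_m}))/Iso(X): the Iso(X)-action on
  section-classes relates the two classes.\<close>
definition target_rel :: "nat \<Rightarrow> (nat \<Rightarrow> nat \<Rightarrow> real) \<Rightarrow> nat list \<Rightarrow> (nat \<Rightarrow> nat \<Rightarrow> real)
    \<Rightarrow> nat list \<Rightarrow> (nat \<Rightarrow> nat \<Rightarrow> real) \<Rightarrow> bool" where
  "target_rel m dX r D r' D' \<longleftrightarrow>
     (\<exists>\<rho> D1 D2. isoX m dX \<rho> \<and> sect_equiv m r D D1 \<and> sect_equiv m r' D' D2 \<and>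
                iso_moves m \<rho> r D1 r' D2)"

definition fiber_sizes :: "nat \<Rightarrow> 'a set \<Rightarrow> ('a \<Rightarrow> nat) \<Rightarrow> nat list" where
  "fiber_sizes m Y f = map (\<lambda>i. card {y\<in>Y. f y = i}) [0..<m]"

definition labelling :: "nat \<Rightarrow> 'a set \<Rightarrow> ('a \<Rightarrow> nat) \<Rightarrow> (nat \<Rightarrow> 'a) \<Rightarrow> bool" where
  "labelling m Y f l \<longleftrightarrow>
     bij_betw l {..<sum_list (fiber_sizes m Y f)} Y \<and>
     (\<forall>i<m. l ` sect (fiber_sizes m Y f) i = {y\<in>Y. f y = i})"

definition dist_matrix :: "nat \<Rightarrow> ('a \<Rightarrow> 'a \<Rightarrow> real) \<Rightarrow> (nat \<Rightarrow> 'a) \<Rightarrow> nat \<Rightarrow> nat \<Rightarrow> real" where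
  "dist_matrix n dY l = (\<lambda>p q. if p < n \<and> q < n then dY (l p) (l q) else 0)"

end

theory Submission
  imports Defs
begin


lemma off_add: "off r (i + k) = off r i + sum_list (take k (drop i r))"
  by (simp add: off_def take_add)

lemma off_mono: "i \<le> j \<Longrightarrow> off r i \<le> off r j"
  using off_add[of r i "j - i"] by simp

lemma off_Suc: "i < length r \<Longrightarrow> off r (Suc i) = off r i + r ! i"
  by (simp add: off_def take_Suc_conv_app_nth)

lemma off_le_sum: "off r i \<le> sum_list r"
proof -
  have "sum_list r = sum_list (take i r) + sum_list (drop i r)"
    by (metis append_take_drop_id sum_list_append)
  then show ?thesis by (simp add: off_def)
qed

lemma sect_end_le: "i < length r \<Longrightarrow> off r i + r ! i \<le> sum_list r"
  using off_Suc[of i r] off_le_sum[of r "Suc i"] by simp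

lemma sect_sub: "i < length r \<Longrightarrow> sect r i \<subseteq> {..<sum_list r}"
  using sect_end_le[of i r] by (auto simp: sect_def)

lemma sect_disj: "i < length r \<Longrightarrow> j < length r \<Longrightarrow> p \<in> sect r i \<Longrightarrow> p \<in> sect r j \<Longrightarrow> i = j"
proof (rule ccontr)
  assume a: "i < length r" "j < length r" "p \<in> sect r i" "p \<in> sect r j" "i \<noteq> j"
  show False
  proof (cases "i < j")
    case True
    then have "off r (Suc i) \<le> off r j" by (intro off_mono) simp
    then show False using a off_Suc[of i r] by (auto simp: sect_def)
  next
    case False
    then have "off r (Suc j) \<le> off r i" using a by (intro off_mono) simp
    then show False using a off_Suc[of j r] by (auto simp: sect_def)
  qed
qed

lemma sect_ex: "p < sum_list r \<Longrightarrow> \<exists>i<length r. p \<in> sect r i"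
proof (induction r arbitrary: p)
  case Nil then show ?case by simp
next
  case (Cons x r)
  show ?case
  proof (cases "p < x")
    case True
    then show ?thesis by (auto simp: sect_def off_def intro!: exI[of _ 0])
  next
    case False
    then have "p - x < sum_list r" using Cons.prems by simp
    then obtain i where "i < length r" "p - x \<in> sect r i" using Cons.IH by blast
    then show ?thesis using False
      by (auto simp: sect_def off_def intro!: exI[of _ "Suc i"])
  qed
qed

definition blk :: "nat list \<Rightarrow> nat \<Rightarrow> nat" where
  "blk r p = (THE i. i < length r \<and> p \<in> sect r i)"

lemma blk_eq: "i < length r \<Longrightarrow> p \<in> sect r i \<Longrightarrow> blk r p = i"
  unfolding blk_def by (rule the_equality) (auto dest: sect_disj)

lemma blk: "p < sum_list r \<Longrightarrow> blk r p < length r \<and> p \<in> sect r (blk r p)"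
  using sect_ex[of p r] blk_eq by metis

lemma blk_off: "i < length r \<Longrightarrow> a < r ! i \<Longrightarrow> blk r (off r i + a) = i"
  by (rule blk_eq) (auto simp: sect_def)

lemma sect_off: "i < length r \<Longrightarrow> a < r ! i \<Longrightarrow> off r i + a \<in> sect r i"
  by (auto simp: sect_def)

lemma sect_perm:
  assumes "bij_betw \<sigma> {..<sum_list r} {..<sum_list r}"
    and "\<forall>i<length r. \<sigma> ` sect r i \<subseteq> sect r i" and "i < length r"
  shows "\<sigma> ` sect r i = sect r i"
proof
  show "\<sigma> ` sect r i \<subseteq> sect r i" using assms by blast
  show "sect r i \<subseteq> \<sigma> ` sect r i"
  proof
    fix q assume q: "q \<in> sect r i"
    then have "q < sum_list r" using sect_sub assms(3) by blast
    then obtain q0 where q0: "q0 < sum_list r" "q = \<sigma> q0"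
      using assms(1) unfolding bij_betw_def by (metis imageE lessThan_iff)
    then obtain j where j: "j < length r" "q0 \<in> sect r j" using blk by blast
    then have "q \<in> sect r j" using assms(2) q0 by blast
    then have "j = i" using sect_disj j q assms(3) by blast
    then show "q \<in> \<sigma> ` sect r i" using j q0 by blast
  qed
qed



lemma sum_perm:
  fixes r r' :: "nat list"
  assumes "length r = m" "length r' = m" "bij_betw \<rho> {..<m} {..<m}" "\<forall>i<m. r' ! (\<rho> i) = r ! i"
  shows "sum_list r' = sum_list r"
proof -
  have "sum_list r = (\<Sum>i<m. r' ! (\<rho> i))"
    using assms by (simp add: sum_list_sum_nth atLeast0LessThan)
  also have "\<dots> = (\<Sum>j<m. r' ! j)" by (rule sum.reindex_bij_betw[OF assms(3)])
  also have "\<dots> = sum_list r'" using assms by (simp add: sum_list_sum_nth atLeast0LessThan)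
  finally show ?thesis by simp
qed

definition move :: "nat list \<Rightarrow> nat list \<Rightarrow> (nat \<Rightarrow> nat) \<Rightarrow> nat \<Rightarrow> nat" where
  "move r r' \<rho> p = off r' (\<rho> (blk r p)) + (p - off r (blk r p))"

locale mv =
  fixes m :: nat and r r' :: "nat list" and \<rho> :: "nat \<Rightarrow> nat"
  assumes len: "length r = m" "length r' = m"
    and rho: "bij_betw \<rho> {..<m} {..<m}" and rr: "\<forall>i<m. r' ! (\<rho> i) = r ! i"
begin

lemma rho_lt: "i < m \<Longrightarrow> \<rho> i < m" using rho by (auto simp: bij_betw_def)

lemma move_off: "i < m \<Longrightarrow> a < r ! i \<Longrightarrow> move r r' \<rho> (off r i + a) = off r' (\<rho> i) + a"
  using blk_off[of i r a] len by (simp add: move_def)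

lemma move_sect: assumes "p < sum_list r"
  shows "move r r' \<rho> p \<in> sect r' (\<rho> (blk r p))"
proof -
  let ?i = "blk r p"
  have "?i < m" "p \<in> sect r ?i" using blk[OF assms] len by auto
  then obtain a where "a < r ! ?i" "p = off r ?i + a" by (auto simp: sect_def intro: that[of "p - off r ?i"])
  then show ?thesis using move_off[of ?i a] \<open>?i < m\<close> rr rho_lt
    by (metis sect_off len(2))
qed

lemma sums: "sum_list r' = sum_list r" using sum_perm[OF len rho rr] .

lemma move_lt: "p < sum_list r \<Longrightarrow> move r r' \<rho> p < sum_list r"
  using move_sect[of p] sect_sub[of "\<rho> (blk r p)" r'] rho_lt blk[of p r] len sums by auto

lemma move_inj: "inj_on (move r r' \<rho>) {..<sum_list r}"
proof (rule inj_onI)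
  fix p q assume p: "p \<in> {..<sum_list r}" and q: "q \<in> {..<sum_list r}"
    and e: "move r r' \<rho> p = move r r' \<rho> q"
  let ?i = "blk r p" let ?j = "blk r q"
  have i: "?i < m" "p \<in> sect r ?i" and j: "?j < m" "q \<in> sect r ?j" using blk p q len by auto
  have "\<rho> ?i = \<rho> ?j" using move_sect[of p] move_sect[of q] p q e sect_disj[of "\<rho> ?i" r' "\<rho> ?j"]
      rho_lt i j len by auto
  then have "?i = ?j" using rho i j unfolding bij_betw_def inj_on_def by auto
  then show "p = q" using e i j by (auto simp: move_def sect_def)
qed

lemma move_bij: "bij_betw (move r r' \<rho>) {..<sum_list r} {..<sum_list r'}"
proof -
  have "move r r' \<rho> ` {..<sum_list r} \<subseteq> {..<sum_list r}" using move_lt by auto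
  moreover have "card (move r r' \<rho> ` {..<sum_list r}) = card {..<sum_list r}"
    using card_image[OF move_inj] .
  ultimately have "move r r' \<rho> ` {..<sum_list r} = {..<sum_list r}"
    by (simp add: card_subset_eq)
  then show ?thesis using move_inj sums by (simp add: bij_betw_def)
qed

lemma move_image: "i < m \<Longrightarrow> move r r' \<rho> ` sect r i = sect r' (\<rho> i)"
proof
  assume i: "i < m"
  show "move r r' \<rho> ` sect r i \<subseteq> sect r' (\<rho> i)"
  proof
    fix q assume "q \<in> move r r' \<rho> ` sect r i"
    then obtain p where "p \<in> sect r i" "q = move r r' \<rho> p" by blast
    then show "q \<in> sect r' (\<rho> i)" using move_sect[of p] blk_eq[of i r p] sect_sub[of i r] i len by auto
  qed
  show "sect r' (\<rho> i) \<subseteq> move r r' \<rho> ` sect r i"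
  proof
    fix q assume q: "q \<in> sect r' (\<rho> i)"
    then have "q = move r r' \<rho> (off r i + (q - off r' (\<rho> i)))" "q - off r' (\<rho> i) < r ! i"
      using move_off[of i "q - off r' (\<rho> i)"] i rr by (auto simp: sect_def)
    then show "q \<in> move r r' \<rho> ` sect r i" using sect_off[of i r] i len by blast
  qed
qed

end


lemma metric_facts:
  assumes M: "metric_on Y dY"
  shows "\<And>x y z. x\<in>Y \<Longrightarrow> y\<in>Y \<Longrightarrow> z\<in>Y \<Longrightarrow> dY x z \<le> dY x y + dY y z"
    and "\<And>x y. x\<in>Y \<Longrightarrow> y\<in>Y \<Longrightarrow> x \<noteq> y \<Longrightarrow> dY x y > 0"
    and "\<And>x y. x\<in>Y \<Longrightarrow> y\<in>Y \<Longrightarrow> dY x y = dY y x"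
    and "\<And>x. x\<in>Y \<Longrightarrow> dY x x = 0"
  using M unfolding metric_on_def by blast+


lemma fs_len: "length (fiber_sizes m Y f) = m" by (simp add: fiber_sizes_def)
lemma fs_nth: "i < m \<Longrightarrow> fiber_sizes m Y f ! i = card {y\<in>Y. f y = i}"
  by (simp add: fiber_sizes_def)

lemma part1:
  assumes L: "is_line m Y dY f"
  shows "\<exists>l. labelling m Y f l"
proof -
  let ?r = "fiber_sizes m Y f"
  let ?F = "\<lambda>i. {y\<in>Y. f y = i}"
  have fin: "finite Y" and fY: "f ` Y = {..<m}" using L unfolding is_line_def by simp_all
  have rlen: "length ?r = m" by (rule fs_len)
  have rnth: "i < m \<Longrightarrow> ?r ! i = card (?F i)" for i by (rule fs_nth)
  define g where "g i = (SOME g. bij_betw g {0..<card (?F i)} (?F i))" for i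
  have g: "bij_betw (g i) {0..<card (?F i)} (?F i)" for i
  proof -
    have "finite (?F i)" using fin by simp
    then show ?thesis unfolding g_def by (metis (no_types, lifting) someI_ex ex_bij_betw_nat_finite)
  qed
  define l where "l p = g (blk ?r p) (p - off ?r (blk ?r p))" for p
  have lo: "l (off ?r i + a) = g i a" if "i < m" "a < ?r ! i" for i a
  proof -
    have "blk ?r (off ?r i + a) = i" by (rule blk_off) (use that rlen in simp_all)
    then show ?thesis by (simp add: l_def)
  qed
  have sect_dec: "\<exists>a. a < ?r ! i \<and> p = off ?r i + a" if "p \<in> sect ?r i" for p i
    using that unfolding sect_def by (intro exI[of _ "p - off ?r i"]) auto
  have img: "l ` sect ?r i = ?F i" if i: "i < m" for i
  proof -
    have "l ` sect ?r i = g i ` {0..<card (?F i)}"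
    proof
      show "l ` sect ?r i \<subseteq> g i ` {0..<card (?F i)}"
      proof
        fix y assume "y \<in> l ` sect ?r i"
        then obtain p where p: "p \<in> sect ?r i" "y = l p" by blast
        then obtain a where a: "a < ?r ! i" "p = off ?r i + a" using sect_dec by blast
        then have "y = g i a" using lo[OF i a(1)] p by simp
        then show "y \<in> g i ` {0..<card (?F i)}" using a rnth[OF i] by simp
      qed
      show "g i ` {0..<card (?F i)} \<subseteq> l ` sect ?r i"
      proof
        fix y assume "y \<in> g i ` {0..<card (?F i)}"
        then obtain a where a: "a < card (?F i)" "y = g i a" by auto
        then have a': "a < ?r ! i" using rnth[OF i] by simp
        then have "l (off ?r i + a) = y" using lo[OF i] a by simp
        moreover have "off ?r i + a \<in> sect ?r i" using sect_off[of i ?r a] a' i rlen by simp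
        ultimately show "y \<in> l ` sect ?r i" by blast
      qed
    qed
    then show ?thesis using g[of i] by (simp add: bij_betw_def)
  qed
  have bp: "blk ?r p < m \<and> p \<in> sect ?r (blk ?r p)" if "p < sum_list ?r" for p
    using blk[OF that] rlen by simp
  have lF: "l p \<in> ?F (blk ?r p)" if "p < sum_list ?r" for p
    using bp[OF that] img[of "blk ?r p"] by blast
  have inj: "inj_on l {..<sum_list ?r}"
  proof (rule inj_onI)
    fix p q assume p: "p \<in> {..<sum_list ?r}" and q: "q \<in> {..<sum_list ?r}" and e: "l p = l q"
    have pl: "p < sum_list ?r" using p by simp
    have ql: "q < sum_list ?r" using q by simp
    have fp: "f (l p) = blk ?r p" using lF[OF pl] by simp
    have fq: "f (l q) = blk ?r q" using lF[OF ql] by simp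
    have bb: "blk ?r p = blk ?r q" using fp fq e by simp
    define i where "i = blk ?r p"
    have i1: "i < m" "p \<in> sect ?r i" using bp[OF pl] unfolding i_def by simp_all
    have i3: "q \<in> sect ?r i" using bp[OF ql] unfolding i_def bb by simp
    obtain a where a: "a < ?r ! i" "p = off ?r i + a" using sect_dec[OF i1(2)] by blast
    obtain b where b: "b < ?r ! i" "q = off ?r i + b" using sect_dec[OF i3] by blast
    have "g i a = g i b" using lo[OF i1(1) a(1)] lo[OF i1(1) b(1)] a(2) b(2) e by simp
    moreover have "inj_on (g i) {0..<card (?F i)}" using g[of i] by (simp add: bij_betw_def)
    moreover have "a \<in> {0..<card (?F i)}" "b \<in> {0..<card (?F i)}" using a(1) b(1) rnth[OF i1(1)] by simp_all
    ultimately have "a = b" unfolding inj_on_def by blast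
    then show "p = q" using a b by simp
  qed
  have "l ` {..<sum_list ?r} = Y"
  proof
    show "l ` {..<sum_list ?r} \<subseteq> Y" using lF by blast
    show "Y \<subseteq> l ` {..<sum_list ?r}"
    proof
      fix y assume y: "y \<in> Y"
      then have fy: "f y < m" using fY by auto
      then have "y \<in> l ` sect ?r (f y)" using img[OF fy] y by simp
      moreover have "sect ?r (f y) \<subseteq> {..<sum_list ?r}" using sect_sub[of "f y" ?r] fy rlen by simp
      ultimately show "y \<in> l ` {..<sum_list ?r}" by blast
    qed
  qed
  then have "labelling m Y f l" using inj img unfolding labelling_def bij_betw_def by simp
  then show ?thesis by blast
qed

lemma lab_props:
  assumes L: "is_line m Y dY f" and l: "labelling m Y f l"
  shows "sum_list (fiber_sizes m Y f) = card Y"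
    and "\<And>p. p \<in> sect (fiber_sizes m Y f) i \<Longrightarrow> i < m \<Longrightarrow> l p \<in> Y \<and> f (l p) = i"
proof -
  show "sum_list (fiber_sizes m Y f) = card Y"
    using l bij_betw_same_card[of l "{..<sum_list (fiber_sizes m Y f)}" Y] by (simp add: labelling_def)
  fix p assume p: "p \<in> sect (fiber_sizes m Y f) i" "i < m"
  then have "l p \<in> {y\<in>Y. f y = i}" using l unfolding labelling_def by blast
  then show "l p \<in> Y \<and> f (l p) = i" by simp
qed

lemma part2:
  assumes L: "is_line m Y dY f" and l: "labelling m Y f l"
  shows "target_elem m (fiber_sizes m Y f) (dist_matrix (sum_list (fiber_sizes m Y f)) dY l)"
proof -
  let ?r = "fiber_sizes m Y f" let ?n = "sum_list ?r"
  have bl: "bij_betw l {..<?n} Y" using l by (simp add: labelling_def)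
  have M: "metric_on Y dY" and fY: "f ` Y = {..<m}" and fin: "finite Y" using L unfolding is_line_def by simp_all
  have ri: "?r ! i \<ge> 1" if "i < m" for i
  proof -
    have "i \<in> f ` Y" using fY that by simp
    then obtain y where "y \<in> Y" "f y = i" by blast
    then have "{y\<in>Y. f y = i} \<noteq> {}" by auto
    moreover have "finite {y\<in>Y. f y = i}" using fin by simp
    ultimately have "card {y\<in>Y. f y = i} > 0" by (simp only: card_gt_0_iff) simp
    then show ?thesis unfolding fs_nth[OF that] by simp
  qed
  have lY: "p < ?n \<Longrightarrow> l p \<in> Y" for p using bl by (auto simp: bij_betw_def)
  have linj: "p < ?n \<Longrightarrow> q < ?n \<Longrightarrow> p \<noteq> q \<Longrightarrow> l p \<noteq> l q" for p q
    using bl unfolding bij_betw_def inj_on_def by blast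
  have tri: "\<And>x y z. x\<in>Y \<Longrightarrow> y\<in>Y \<Longrightarrow> z\<in>Y \<Longrightarrow> dY x z \<le> dY x y + dY y z"
    and pos: "\<And>x y. x\<in>Y \<Longrightarrow> y\<in>Y \<Longrightarrow> x \<noteq> y \<Longrightarrow> dY x y > 0"
    and sym: "\<And>x y. x\<in>Y \<Longrightarrow> y\<in>Y \<Longrightarrow> dY x y = dY y x"
    and zer: "\<And>x. x\<in>Y \<Longrightarrow> dY x x = 0"
    using metric_facts[OF M] by blast+
  have "dist_matrix ?n dY l \<in> Met ?n"
    unfolding Met_def dist_matrix_def mem_Collect_eq
  proof (intro conjI allI impI)
    fix i j k assume "i < ?n" "j < ?n" "k < ?n"
    then show "(if i < ?n \<and> j < ?n then dY (l i) (l j) else 0) + (if j < ?n \<and> k < ?n then dY (l j) (l k) else 0)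
       \<ge> (if i < ?n \<and> k < ?n then dY (l i) (l k) else 0)"
    proof -
      have "dY (l i) (l k) \<le> dY (l i) (l j) + dY (l j) (l k)" using tri lY \<open>i < ?n\<close> \<open>j < ?n\<close> \<open>k < ?n\<close> by blast
      then show ?thesis using \<open>i < ?n\<close> \<open>j < ?n\<close> \<open>k < ?n\<close> by simp
    qed
  next
    fix i j assume "i < ?n" "j < ?n" "i \<noteq> j"
    then show "(if i < ?n \<and> j < ?n then dY (l i) (l j) else 0) > 0"
    proof -
      have "dY (l i) (l j) > 0" using pos lY linj \<open>i < ?n\<close> \<open>j < ?n\<close> \<open>i \<noteq> j\<close> by blast
      then show ?thesis using \<open>i < ?n\<close> \<open>j < ?n\<close> by simp
    qed
  next
    fix i j assume "i < ?n" "j < ?n" "i \<noteq> j"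
    then show "(if i < ?n \<and> j < ?n then dY (l i) (l j) else 0) = (if j < ?n \<and> i < ?n then dY (l j) (l i) else 0)"
    proof -
      have "dY (l i) (l j) = dY (l j) (l i)" using sym lY \<open>i < ?n\<close> \<open>j < ?n\<close> by blast
      then show ?thesis using \<open>i < ?n\<close> \<open>j < ?n\<close> by simp
    qed
  next
    fix i assume "i < ?n"
    then show "(if i < ?n \<and> i < ?n then dY (l i) (l i) else 0) = 0" using zer[OF lY] by simp
  next
    fix i j assume "\<not> (i < ?n \<and> j < ?n)"
    then show "(if i < ?n \<and> j < ?n then dY (l i) (l j) else 0) = 0" by auto
  qed
  then show ?thesis using ri fs_len by (simp add: target_elem_def)
qed



lemma lab_pt:
  assumes L: "is_line m Y dY f" and l: "labelling m Y f l" and p: "p < sum_list (fiber_sizes m Y f)"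
  shows "l p \<in> Y \<and> f (l p) = blk (fiber_sizes m Y f) p \<and> blk (fiber_sizes m Y f) p < m
     \<and> p \<in> sect (fiber_sizes m Y f) (blk (fiber_sizes m Y f) p)"
proof -
  have b: "blk (fiber_sizes m Y f) p < m" "p \<in> sect (fiber_sizes m Y f) (blk (fiber_sizes m Y f) p)"
    using blk[OF p] by (simp_all add: fs_len)
  show ?thesis using lab_props(2)[OF L l b(2) b(1)] b by simp
qed

lemma lab_bij:
  assumes l: "labelling m Y f l"
  shows "bij_betw l {..<sum_list (fiber_sizes m Y f)} Y"
  using l by (simp add: labelling_def)

lemma isoX_bij: "isoX m dX k \<Longrightarrow> bij_betw k {..<m} {..<m}" by (simp add: isoX_def)

lemma fibre_map:
  assumes L: "is_line m Y dY f" and L': "is_line m Y' dY' f'"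
    and h: "bij_betw h Y Y'" and k: "bij_betw k {..<m} {..<m}"
    and c: "\<forall>y\<in>Y. k (f y) = f' (h y)" and i: "i < m"
  shows "h ` {y\<in>Y. f y = i} = {y\<in>Y'. f' y = k i}"
proof
  show "h ` {y\<in>Y. f y = i} \<subseteq> {y\<in>Y'. f' y = k i}"
  proof
    fix z assume "z \<in> h ` {y\<in>Y. f y = i}"
    then obtain y where y: "y \<in> Y" "f y = i" "z = h y" by blast
    then have "z \<in> Y'" using h by (auto simp: bij_betw_def)
    moreover have "f' z = k i" using c y by metis
    ultimately show "z \<in> {y\<in>Y'. f' y = k i}" by simp
  qed
  show "{y\<in>Y'. f' y = k i} \<subseteq> h ` {y\<in>Y. f y = i}"
  proof
    fix z assume z: "z \<in> {y\<in>Y'. f' y = k i}"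
    then have "z \<in> h ` Y" using h by (simp add: bij_betw_def)
    then obtain y where y: "y \<in> Y" "z = h y" by blast
    have fy: "f y < m" using L y unfolding is_line_def by blast
    have "k (f y) = k i" using c y z by simp
    then have "f y = i" using k fy i unfolding bij_betw_def inj_on_def by simp
    then show "z \<in> h ` {y\<in>Y. f y = i}" using y by blast
  qed
qed

lemma fibre_card:
  assumes L: "is_line m Y dY f" and L': "is_line m Y' dY' f'"
    and h: "bij_betw h Y Y'" and k: "bij_betw k {..<m} {..<m}"
    and c: "\<forall>y\<in>Y. k (f y) = f' (h y)" and i: "i < m"
  shows "fiber_sizes m Y' f' ! (k i) = fiber_sizes m Y f ! i"
proof -
  have ki: "k i < m" using k i by (auto simp: bij_betw_def)
  have "inj_on h {y\<in>Y. f y = i}" using h by (auto simp: bij_betw_def intro: inj_on_subset)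
  then have "card (h ` {y\<in>Y. f y = i}) = card {y\<in>Y. f y = i}" by (rule card_image)
  then show ?thesis using fibre_map[OF assms] by (simp add: fs_nth[OF ki] fs_nth[OF i])
qed



lemma part3:
  assumes L: "is_line m Y dY f" and l: "labelling m Y f l"
    and L': "is_line m Y' dY' f'" and l': "labelling m Y' f' l'"
    and E: "line_equiv m dX Y dY f Y' dY' f'"
  shows "target_rel m dX
          (fiber_sizes m Y f) (dist_matrix (sum_list (fiber_sizes m Y f)) dY l)
          (fiber_sizes m Y' f') (dist_matrix (sum_list (fiber_sizes m Y' f')) dY' l')"
proof -
  let ?r = "fiber_sizes m Y f" let ?r' = "fiber_sizes m Y' f'"
  let ?n = "sum_list ?r" let ?n' = "sum_list ?r'"
  let ?D = "dist_matrix ?n dY l" let ?D' = "dist_matrix ?n' dY' l'"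
  obtain h k where h: "bij_betw h Y Y'" and hd: "\<forall>y\<in>Y. \<forall>z\<in>Y. dY' (h y) (h z) = dY y z"
    and k: "isoX m dX k" and c: "\<forall>y\<in>Y. k (f y) = f' (h y)"
    using E unfolding line_equiv_def by blast
  have kb: "bij_betw k {..<m} {..<m}" using isoX_bij[OF k] .
  have rr: "\<forall>i<m. ?r' ! (k i) = ?r ! i" using fibre_card[OF L L' h kb c] by blast
  have len: "length ?r = m" "length ?r' = m" by (simp_all add: fs_len)
  interpret mv m ?r ?r' k by (unfold_locales) (use len kb rr in simp_all)
  have nn: "?n' = ?n" by (rule sums)
  define \<tau> where "\<tau> = move ?r ?r' k"
  have \<tau>b: "bij_betw \<tau> {..<?n} {..<?n'}" unfolding \<tau>_def by (rule move_bij)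
  have tinv: "bij_betw (inv_into {..<?n} \<tau>) {..<?n'} {..<?n}" using bij_betw_inv_into[OF \<tau>b] .
  have linv: "bij_betw (inv_into {..<?n'} l') Y' {..<?n'}" using bij_betw_inv_into[OF lab_bij[OF l']] .
  define \<sigma> where "\<sigma> = inv_into {..<?n'} l' \<circ> h \<circ> l \<circ> inv_into {..<?n} \<tau>"
  have b1: "bij_betw (l \<circ> inv_into {..<?n} \<tau>) {..<?n'} Y" using bij_betw_trans[OF tinv lab_bij[OF l]] .
  have b2: "bij_betw (h \<circ> (l \<circ> inv_into {..<?n} \<tau>)) {..<?n'} Y'" using bij_betw_trans[OF b1 h] .
  have b3: "bij_betw (inv_into {..<?n'} l' \<circ> (h \<circ> (l \<circ> inv_into {..<?n} \<tau>))) {..<?n'} {..<?n'}"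
    using bij_betw_trans[OF b2 linv] .
  have \<sigma>b: "bij_betw \<sigma> {..<?n'} {..<?n'}" using b3 unfolding \<sigma>_def by (simp add: comp_assoc)
  have tlt: "\<tau> p < ?n'" if "p < ?n" for p using \<tau>b that by (auto simp: bij_betw_def)
  have key: "l' (\<sigma> (\<tau> p)) = h (l p) \<and> \<sigma> (\<tau> p) < ?n'" if p: "p < ?n" for p
  proof -
    have "inv_into {..<?n} \<tau> (\<tau> p) = p" using bij_betw_inv_into_left[OF \<tau>b] p by simp
    then have e: "\<sigma> (\<tau> p) = inv_into {..<?n'} l' (h (l p))" unfolding \<sigma>_def by simp
    have "l p \<in> Y" using lab_pt[OF L l p] by simp
    then have hy: "h (l p) \<in> Y'" using h by (auto simp: bij_betw_def)
    have "l' (inv_into {..<?n'} l' (h (l p))) = h (l p)"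
      using bij_betw_inv_into_right[OF lab_bij[OF l'] hy] .
    moreover have "inv_into {..<?n'} l' (h (l p)) < ?n'" using linv hy by (auto simp: bij_betw_def)
    ultimately show ?thesis using e by simp
  qed
  have sub: "\<forall>j<length ?r'. \<sigma> ` sect ?r' j \<subseteq> sect ?r' j"
  proof (intro allI impI subsetI)
    fix j z assume j: "j < length ?r'" and z: "z \<in> \<sigma> ` sect ?r' j"
    then obtain q where q: "q \<in> sect ?r' j" "z = \<sigma> q" by blast
    have qn: "q < ?n'" using sect_sub[OF j] q by blast
    then have "q \<in> \<tau> ` {..<?n}" using \<tau>b by (simp add: bij_betw_def)
    then obtain p where p: "p < ?n" "q = \<tau> p" by blast
    define i where "i = blk ?r p"
    have lp: "l p \<in> Y" "f (l p) = i" "i < m" using lab_pt[OF L l p(1)] i_def by simp_all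
    have "\<tau> p \<in> sect ?r' (k i)" unfolding \<tau>_def i_def by (rule move_sect[OF p(1)])
    moreover have "k i < m" using kb lp(3) by (auto simp: bij_betw_def)
    ultimately have kij: "k i = j" using sect_disj[of "k i" ?r' j q] q p j len by simp
    have fh: "f' (h (l p)) = j" using c lp kij by metis
    define s where "s = \<sigma> (\<tau> p)"
    have s: "l' s = h (l p)" "s < ?n'" using key[OF p(1)] s_def by simp_all
    have "f' (l' s) = blk ?r' s" "s \<in> sect ?r' (blk ?r' s)" using lab_pt[OF L' l' s(2)] by simp_all
    then have "s \<in> sect ?r' j" using s fh by simp
    then show "z \<in> sect ?r' j" using q p s_def by simp
  qed
  have \<sigma>sect: "\<forall>j<m. \<sigma> ` sect ?r' j = sect ?r' j"
    using sect_perm[OF \<sigma>b sub] len by simp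
  define D2 where "D2 = (\<lambda>p q. if p < ?n' \<and> q < ?n' then ?D' (\<sigma> p) (\<sigma> q) else 0)"
  have SE1: "sect_equiv m ?r ?D ?D"
    unfolding sect_equiv_def
    by (rule exI[of _ id]) (simp add: dist_matrix_def)
  have SE2: "sect_equiv m ?r' ?D' D2"
    unfolding sect_equiv_def using \<sigma>b \<sigma>sect D2_def by blast
  have IM: "iso_moves m k ?r ?D ?r' D2"
    unfolding iso_moves_def
  proof (intro conjI allI impI)
    show "length ?r' = m" by (rule len)
    show "\<And>i. i < m \<Longrightarrow> ?r' ! k i = ?r ! i" using rr by simp
    show "\<And>p q. \<not> (p < ?n' \<and> q < ?n') \<Longrightarrow> D2 p q = 0" unfolding D2_def by auto
    fix i j a b assume i: "i < m" and j: "j < m" and a: "a < ?r ! i" and b: "b < ?r ! j"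
    define P where "P = off ?r i + a"
    define Q where "Q = off ?r j + b"
    have Pn: "P < ?n" using sect_sub[of i ?r] sect_off[of i ?r a] i a len P_def by auto
    have Qn: "Q < ?n" using sect_sub[of j ?r] sect_off[of j ?r b] j b len Q_def by auto
    have tP: "\<tau> P = off ?r' (k i) + a" unfolding \<tau>_def P_def by (rule move_off[OF i a])
    have tQ: "\<tau> Q = off ?r' (k j) + b" unfolding \<tau>_def Q_def by (rule move_off[OF j b])
    have "D2 (\<tau> P) (\<tau> Q) = dY' (l' (\<sigma> (\<tau> P))) (l' (\<sigma> (\<tau> Q)))"
      unfolding D2_def dist_matrix_def using key[OF Pn] key[OF Qn] tlt[OF Pn] tlt[OF Qn] by simp
    also have "\<dots> = dY' (h (l P)) (h (l Q))" using key[OF Pn] key[OF Qn] by simp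
    also have "\<dots> = dY (l P) (l Q)" using hd lab_pt[OF L l Pn] lab_pt[OF L l Qn] by simp
    also have "\<dots> = ?D P Q" using Pn Qn by (simp add: dist_matrix_def)
    finally show "D2 (off ?r' (k i) + a) (off ?r' (k j) + b) = ?D (off ?r i + a) (off ?r j + b)"
      using tP tQ P_def Q_def by simp
  qed
  show ?thesis unfolding target_rel_def using k SE1 SE2 IM by blast
qed



lemma sect_dec': "p \<in> sect r i \<Longrightarrow> \<exists>a. a < r ! i \<and> p = off r i + a"
  unfolding sect_def by (intro exI[of _ "p - off r i"]) auto

lemma part4:
  assumes L: "is_line m Y dY f" and l: "labelling m Y f l"
    and L': "is_line m Y' dY' f'" and l': "labelling m Y' f' l'"
    and T: "target_rel m dX
          (fiber_sizes m Y f) (dist_matrix (sum_list (fiber_sizes m Y f)) dY l)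
          (fiber_sizes m Y' f') (dist_matrix (sum_list (fiber_sizes m Y' f')) dY' l')"
  shows "line_equiv m dX Y dY f Y' dY' f'"
proof -
  let ?r = "fiber_sizes m Y f" let ?r' = "fiber_sizes m Y' f'"
  let ?n = "sum_list ?r" let ?n' = "sum_list ?r'"
  let ?D = "dist_matrix ?n dY l" let ?D' = "dist_matrix ?n' dY' l'"
  obtain \<rho> D1 D2 where k: "isoX m dX \<rho>" and S1: "sect_equiv m ?r ?D D1"
    and S2: "sect_equiv m ?r' ?D' D2" and IM: "iso_moves m \<rho> ?r D1 ?r' D2"
    using T unfolding target_rel_def by blast
  obtain \<sigma> where \<sigma>b: "bij_betw \<sigma> {..<?n} {..<?n}" and \<sigma>s: "\<forall>i<m. \<sigma> ` sect ?r i = sect ?r i"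
    and D1: "\<forall>p q. D1 p q = (if p < ?n \<and> q < ?n then ?D (\<sigma> p) (\<sigma> q) else 0)"
    using S1 unfolding sect_equiv_def by blast
  obtain \<sigma>' where \<sigma>'b: "bij_betw \<sigma>' {..<?n'} {..<?n'}" and \<sigma>'s: "\<forall>i<m. \<sigma>' ` sect ?r' i = sect ?r' i"
    and D2: "\<forall>p q. D2 p q = (if p < ?n' \<and> q < ?n' then ?D' (\<sigma>' p) (\<sigma>' q) else 0)"
    using S2 unfolding sect_equiv_def by blast
  have kb: "bij_betw \<rho> {..<m} {..<m}" using isoX_bij[OF k] .
  have rr: "\<forall>i<m. ?r' ! (\<rho> i) = ?r ! i"
    and ent: "\<forall>i<m. \<forall>j<m. \<forall>a<?r ! i. \<forall>b<?r ! j.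
        D2 (off ?r' (\<rho> i) + a) (off ?r' (\<rho> j) + b) = D1 (off ?r i + a) (off ?r j + b)"
    using IM unfolding iso_moves_def by blast+
  have len: "length ?r = m" "length ?r' = m" by (simp_all add: fs_len)
  interpret mv m ?r ?r' \<rho> by (unfold_locales) (use len kb rr in simp_all)
  have nn: "?n' = ?n" by (rule sums)
  define \<tau> where "\<tau> = move ?r ?r' \<rho>"
  have \<tau>b: "bij_betw \<tau> {..<?n} {..<?n'}" unfolding \<tau>_def by (rule move_bij)
  have tlt: "\<tau> p < ?n'" if "p < ?n" for p using \<tau>b that by (auto simp: bij_betw_def)
  have ent2: "D2 (\<tau> p) (\<tau> q) = D1 p q" if p: "p < ?n" and q: "q < ?n" for p q
  proof -
    obtain i where i: "i < m" "p \<in> sect ?r i" using blk[OF p] len by auto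
    obtain j where j: "j < m" "q \<in> sect ?r j" using blk[OF q] len by auto
    obtain a where a: "a < ?r ! i" "p = off ?r i + a" using sect_dec'[OF i(2)] by blast
    obtain b where b: "b < ?r ! j" "q = off ?r j + b" using sect_dec'[OF j(2)] by blast
    have "\<tau> p = off ?r' (\<rho> i) + a" unfolding \<tau>_def a(2) by (rule move_off[OF i(1) a(1)])
    moreover have "\<tau> q = off ?r' (\<rho> j) + b" unfolding \<tau>_def b(2) by (rule move_off[OF j(1) b(1)])
    ultimately show ?thesis using ent i(1) j(1) a b by simp
  qed
  have lb: "bij_betw l {..<?n} Y" by (rule lab_bij[OF l])
  have lb': "bij_betw l' {..<?n'} Y'" by (rule lab_bij[OF l'])
  define g where "g = inv_into {..<?n} \<sigma> \<circ> inv_into {..<?n} l"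
  have gb: "bij_betw g Y {..<?n}" unfolding g_def
    by (rule bij_betw_trans[OF bij_betw_inv_into[OF lb] bij_betw_inv_into[OF \<sigma>b]])
  have gl: "l (\<sigma> (g y)) = y" if y: "y \<in> Y" for y
  proof -
    have "inv_into {..<?n} l y \<in> {..<?n}" using bij_betw_inv_into[OF lb] y by (auto simp: bij_betw_def)
    then have "\<sigma> (g y) = inv_into {..<?n} l y" unfolding g_def
      using bij_betw_inv_into_right[OF \<sigma>b] by simp
    then show ?thesis using bij_betw_inv_into_right[OF lb y] by simp
  qed
  define h where "h = l' \<circ> \<sigma>' \<circ> \<tau> \<circ> g"
  have hb: "bij_betw h Y Y'"
  proof -
    have "bij_betw (\<tau> \<circ> g) Y {..<?n'}" by (rule bij_betw_trans[OF gb \<tau>b])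
    then have "bij_betw (\<sigma>' \<circ> (\<tau> \<circ> g)) Y {..<?n'}" by (rule bij_betw_trans[OF _ \<sigma>'b])
    then have "bij_betw (l' \<circ> (\<sigma>' \<circ> (\<tau> \<circ> g))) Y Y'" by (rule bij_betw_trans[OF _ lb'])
    then show ?thesis unfolding h_def by (simp add: comp_assoc)
  qed
  have glt: "g y < ?n" if "y \<in> Y" for y using gb that by (auto simp: bij_betw_def)
  have s'lt: "\<sigma>' q < ?n'" if "q < ?n'" for q using \<sigma>'b that by (auto simp: bij_betw_def)
  have slt: "\<sigma> q < ?n" if "q < ?n" for q using \<sigma>b that by (auto simp: bij_betw_def)
  have dist: "dY' (h y) (h z) = dY y z" if y: "y \<in> Y" and z: "z \<in> Y" for y z
  proof -
    let ?p = "g y" let ?q = "g z"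
    have pn: "?p < ?n" and qn: "?q < ?n" using glt y z by auto
    have "dY' (h y) (h z) = ?D' (\<sigma>' (\<tau> ?p)) (\<sigma>' (\<tau> ?q))"
      unfolding h_def dist_matrix_def using s'lt[OF tlt[OF pn]] s'lt[OF tlt[OF qn]] by simp
    also have "\<dots> = D2 (\<tau> ?p) (\<tau> ?q)" using D2 tlt[OF pn] tlt[OF qn] by simp
    also have "\<dots> = D1 ?p ?q" by (rule ent2[OF pn qn])
    also have "\<dots> = ?D (\<sigma> ?p) (\<sigma> ?q)" using D1 pn qn by simp
    also have "\<dots> = dY (l (\<sigma> ?p)) (l (\<sigma> ?q))" using slt[OF pn] slt[OF qn] by (simp add: dist_matrix_def)
    also have "\<dots> = dY y z" using gl[OF y] gl[OF z] by simp
    finally show ?thesis .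
  qed
  have comm: "\<rho> (f y) = f' (h y)" if y: "y \<in> Y" for y
  proof -
    let ?p = "g y"
    have pn: "?p < ?n" using glt y by auto
    define i where "i = blk ?r ?p"
    have i: "i < m" "?p \<in> sect ?r i" using blk[OF pn] len i_def by auto
    have "\<sigma> ?p \<in> sect ?r i" using \<sigma>s i by blast
    then have "blk ?r (\<sigma> ?p) = i" using blk_eq[of i ?r] i len by simp
    then have fy: "f y = i" using lab_pt[OF L l slt[OF pn]] gl[OF y] by simp
    have "\<tau> ?p \<in> sect ?r' (\<rho> i)" unfolding \<tau>_def i_def by (rule move_sect[OF pn])
    moreover have ri: "\<rho> i < m" using kb i by (auto simp: bij_betw_def)
    ultimately have "\<sigma>' (\<tau> ?p) \<in> sect ?r' (\<rho> i)" using \<sigma>'s by blast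
    then have "blk ?r' (\<sigma>' (\<tau> ?p)) = \<rho> i" using blk_eq[of "\<rho> i" ?r'] ri len by simp
    then have "f' (h y) = \<rho> i" using lab_pt[OF L' l' s'lt[OF tlt[OF pn]]] unfolding h_def by simp
    then show ?thesis using fy by simp
  qed
  show ?thesis unfolding line_equiv_def using hb dist k comm by blast
qed



lemma part5:
  assumes T: "target_elem m r D"
  shows "\<exists>(Y::nat set) dY f l. is_line m Y dY f \<and> labelling m Y f l \<and>
           target_rel m dX
             (fiber_sizes m Y f) (dist_matrix (sum_list (fiber_sizes m Y f)) dY l) r D"
proof -
  let ?n = "sum_list r"
  have len: "length r = m" and r1: "\<forall>i<m. r ! i \<ge> 1" and DM: "D \<in> Met ?n"
    using T unfolding target_elem_def by simp_all
  have DM': "(\<forall>i j. \<not> (i < ?n \<and> j < ?n) \<longrightarrow> D i j = 0) \<and>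
               (\<forall>i<?n. D i i = 0) \<and>
               (\<forall>i<?n. \<forall>j<?n. i \<noteq> j \<longrightarrow> D i j > 0 \<and> D i j = D j i) \<and>
               (\<forall>i<?n. \<forall>j<?n. \<forall>k<?n. D i j + D j k \<ge> D i k)"
    using DM unfolding Met_def mem_Collect_eq .
  have Dz: "\<And>i j. \<not> (i < ?n \<and> j < ?n) \<Longrightarrow> D i j = 0" using conjunct1[OF DM'] by blast
  have Dd: "\<And>i. i < ?n \<Longrightarrow> D i i = 0" using conjunct1[OF conjunct2[OF DM']] by blast
  have Dp: "\<And>i j. i < ?n \<Longrightarrow> j < ?n \<Longrightarrow> i \<noteq> j \<Longrightarrow> D i j > 0 \<and> D i j = D j i"
    using conjunct1[OF conjunct2[OF conjunct2[OF DM']]] by blast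
  have Dt: "\<And>i j k. i < ?n \<Longrightarrow> j < ?n \<Longrightarrow> k < ?n \<Longrightarrow> D i j + D j k \<ge> D i k"
    using conjunct2[OF conjunct2[OF conjunct2[OF DM']]] by blast
  have Dif: "(if p < ?n \<and> q < ?n then D p q else 0) = D p q" for p q using Dz by simp
  have fib: "{p \<in> {..<?n}. blk r p = i} = sect r i" if i: "i < m" for i
  proof
    show "{p \<in> {..<?n}. blk r p = i} \<subseteq> sect r i" using blk by auto
    show "sect r i \<subseteq> {p \<in> {..<?n}. blk r p = i}"
      using sect_sub[of i r] blk_eq[of i r] i len by auto
  qed
  have fs: "fiber_sizes m {..<?n} (blk r) = r"
  proof (rule nth_equalityI)
    show "length (fiber_sizes m {..<?n} (blk r)) = length r" using len by (simp add: fs_len)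
    fix i assume "i < length (fiber_sizes m {..<?n} (blk r))"
    then have i: "i < m" by (simp add: fs_len)
    have "fiber_sizes m {..<?n} (blk r) ! i = card {y \<in> {..<?n}. blk r y = i}" by (rule fs_nth[OF i])
    also have "\<dots> = card (sect r i)" by (simp only: fib[OF i])
    also have "\<dots> = r ! i" by (simp add: sect_def)
    finally show "fiber_sizes m {..<?n} (blk r) ! i = r ! i" .
  qed
  have met: "metric_on {..<?n} D"
    unfolding metric_on_def
  proof (intro conjI ballI impI)
    fix x assume "x \<in> {..<?n}" then show "D x x = 0" using Dd by simp
  next
    fix x y assume "x \<in> {..<?n}" "y \<in> {..<?n}" "x \<noteq> y" then show "D x y > 0" using Dp by simp
  next
    fix x y assume x: "x \<in> {..<?n}" and y: "y \<in> {..<?n}"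
    show "D x y = D y x" using Dp[of x y] x y by (cases "x = y") auto
  next
    fix x y z assume "x \<in> {..<?n}" "y \<in> {..<?n}" "z \<in> {..<?n}"
    then show "D x z \<le> D x y + D y z" using Dt by simp
  qed
  have img: "blk r ` {..<?n} = {..<m}"
  proof
    show "blk r ` {..<?n} \<subseteq> {..<m}" using blk len by auto
    show "{..<m} \<subseteq> blk r ` {..<?n}"
    proof
      fix i assume "i \<in> {..<m}"
      then have i: "i < m" by simp
      have o: "off r i \<in> sect r i" proof -
        have "0 < r ! i" using r1 i by (simp add: Suc_le_eq)
        then show ?thesis using sect_off[of i r 0] i len by simp
      qed
      then have "off r i < ?n" using sect_sub[of i r] i len by auto
      moreover have "blk r (off r i) = i" using blk_eq[OF _ o] i len by simp
      ultimately show "i \<in> blk r ` {..<?n}" by force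
    qed
  qed
  have IL: "is_line m {..<?n} D (blk r)" unfolding is_line_def using met img by simp
  have LB: "labelling m {..<?n} (blk r) id" unfolding labelling_def fs using fib by simp
  have DMi: "dist_matrix ?n D id = D" unfolding dist_matrix_def by (intro ext) (use Dz in auto)
  have isoid: "isoX m dX id" unfolding isoX_def by simp
  have se: "sect_equiv m r D D" unfolding sect_equiv_def
  proof (intro exI[of _ id] conjI allI impI)
    show "bij_betw id {..<?n} {..<?n}" by simp
  next
    fix i assume "i < m" show "id ` sect r i = sect r i" by simp
  next
    fix p q show "D p q = (if p < ?n \<and> q < ?n then D (id p) (id q) else 0)" using Dz by simp
  qed
  have im: "iso_moves m id r D r D" unfolding iso_moves_def using len Dz by auto
  have "target_rel m dX r D r D" unfolding target_rel_def using isoid se im by blast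
  then have "target_rel m dX (fiber_sizes m {..<?n} (blk r))
      (dist_matrix (sum_list (fiber_sizes m {..<?n} (blk r))) D id) r D" unfolding fs DMi .
  then show ?thesis using IL LB by blast
qed


theorem proposition3p6:
  fixes m :: nat and dX :: "nat \<Rightarrow> nat \<Rightarrow> real"
  assumes X: "metric_on {..<m} dX"
  shows
    \<comment> \<open>every line admits a labelling as described\<close>
    "(\<forall>(Y::'a set) dY f. is_line m Y dY f \<longrightarrow> (\<exists>l. labelling m Y f l))
     \<comment> \<open>the resulting matrix lies in the component indexed by (r_1,...,r_m)\<close>
   \<and> (\<forall>(Y::'a set) dY f l. is_line m Y dY f \<and> labelling m Y f l \<longrightarrow>
        target_elem m (fiber_sizes m Y f)
          (dist_matrix (sum_list (fiber_sizes m Y f)) dY l))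
     \<comment> \<open>well-defined: independent of labelling and of the representative of the line\<close>
   \<and> (\<forall>(Y::'a set) dY f l (Y'::'b set) dY' f' l'.
        is_line m Y dY f \<and> labelling m Y f l \<and>
        is_line m Y' dY' f' \<and> labelling m Y' f' l' \<and>
        line_equiv m dX Y dY f Y' dY' f' \<longrightarrow>
        target_rel m dX
          (fiber_sizes m Y f) (dist_matrix (sum_list (fiber_sizes m Y f)) dY l)
          (fiber_sizes m Y' f') (dist_matrix (sum_list (fiber_sizes m Y' f')) dY' l'))
     \<comment> \<open>injective\<close>
   \<and> (\<forall>(Y::'a set) dY f l (Y'::'b set) dY' f' l'.
        is_line m Y dY f \<and> labelling m Y f l \<and>
        is_line m Y' dY' f' \<and> labelling m Y' f' l' \<and>
        target_rel m dX
          (fiber_sizes m Y f) (dist_matrix (sum_list (fiber_sizes m Y f)) dY l)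
          (fiber_sizes m Y' f') (dist_matrix (sum_list (fiber_sizes m Y' f')) dY' l') \<longrightarrow>
        line_equiv m dX Y dY f Y' dY' f')
     \<comment> \<open>surjective\<close>
   \<and> (\<forall>r D. target_elem m r D \<longrightarrow>
        (\<exists>(Y::nat set) dY f l. is_line m Y dY f \<and> labelling m Y f l \<and>
           target_rel m dX
             (fiber_sizes m Y f) (dist_matrix (sum_list (fiber_sizes m Y f)) dY l) r D))"
  proof (intro conjI)
  show "\<forall>(Y::'a set) dY f. is_line m Y dY f \<longrightarrow> (\<exists>l. labelling m Y f l)"
    by (intro allI impI) (rule part1)
  show "\<forall>(Y::'a set) dY f l. is_line m Y dY f \<and> labelling m Y f l \<longrightarrow>
        target_elem m (fiber_sizes m Y f)
          (dist_matrix (sum_list (fiber_sizes m Y f)) dY l)"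
    by (intro allI impI, elim conjE) (rule part2)
qed (intro allI impI, (elim conjE)?, (rule part3 | rule part4 | rule part5); assumption)+

end
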